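(* Let $m=m(n)$ be a sequence of positive integers and $p=p(n)$ satisfy $p=o\!\left(\frac{1}{n\sqrt[3]{m}}\right)$. Put $$\hat p=1-\exp\!\left(-mp^{2}(1-p)^{n-2}\right).$$ Let $a\in[0,1]$ and let $\mathcal A$ be any graph property (an isomorphism-closed family of graphs on the $n$-element vertex set). Then $\Pr\{G(n,\hat p)\in\mathcal A\}\to a$ if and only if $\Pr\{\mathcal G(n,m,p)\in\mathcal A\}\to a$ (limits as $n\to\infty$).
   Context: $G(n,p)$ denotes the binomial random graph on an $n$-element vertex set in which each edge appears independently with probability $p$. The random intersection graph $\mathcal G(n,m,p)$ is defined as follows: there is a vertex set $\mathcal V$ with $|\mathcal V|=n$ and an auxiliary set of objects $\mathcal W$ with $|\mathcal W|=m$; each vertex $v$ is assigned a random set $W(v)\subseteq\mathcal W$, where the events $w\in W(v)$ occur independently with probability $p$ for all pairs $(v,w)\in\mathcal V\times\mathcal W$; two distinct vertices $v_1,v_2$ are adjacent iff $W(v_1)\cap W(v_2)\neq\emptyset$. *)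

theory Defs
  imports Complex_Main "HOL-Library.Landau_Symbols" "HOL-Library.FuncSet"
begin

text \<open>Graphs on the vertex set {0..<n}: a graph is a set of 2-element subsets of {..<n}.\<close>

definition all_edges :: "nat \<Rightarrow> nat set set" where
  "all_edges n = {e. e \<subseteq> {..<n} \<and> card e = 2}"

definition graph_property :: "(nat \<Rightarrow> nat set set set) \<Rightarrow> bool" where
  "graph_property A \<longleftrightarrow>
     (\<forall>n. A n \<subseteq> Pow (all_edges n)) \<and>
     (\<forall>n \<sigma> E. bij_betw \<sigma> {..<n} {..<n} \<and> E \<subseteq> all_edges n \<longrightarrow>
        (E \<in> A n \<longleftrightarrow> (\<lambda>e. \<sigma> ` e) ` E \<in> A n))"

definition prob_Gnp :: "nat \<Rightarrow> real \<Rightarrow> nat set set set \<Rightarrow> real" where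
  "prob_Gnp n q F =
     (\<Sum>E\<in>Pow (all_edges n) \<inter> F. q ^ card E * (1 - q) ^ (card (all_edges n) - card E))"

definition intersection_graph :: "nat \<Rightarrow> (nat \<Rightarrow> nat set) \<Rightarrow> nat set set" where
  "intersection_graph n W =
     {{u, v} | u v. u < n \<and> v < n \<and> u \<noteq> v \<and> W u \<inter> W v \<noteq> {}}"

definition prob_RIG :: "nat \<Rightarrow> nat \<Rightarrow> real \<Rightarrow> nat set set set \<Rightarrow> real" where
  "prob_RIG n m p F =
     (\<Sum>W\<in>PiE {..<n} (\<lambda>_. Pow {..<m}).
        (\<Prod>v<n. p ^ card (W v) * (1 - p) ^ (m - card (W v))) *
        (if intersection_graph n W \<in> F then 1 else 0))"

end

theory Submission
  imports Defs "HOL-Probability.Probability"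
begin


lemma integral_bind_pmf_bdd:
  fixes f :: "'b \<Rightarrow> real"
  assumes "\<And>x. \<bar>f x\<bar> \<le> B"
  shows "measure_pmf.expectation (bind_pmf M N) f = measure_pmf.expectation M (\<lambda>x. measure_pmf.expectation (N x) f)"
  unfolding measure_pmf_bind
  apply (rule integral_bind[where K="count_space UNIV" and B=B and B'=1])
  using assms apply auto
  by (simp add: measure_pmf_in_subprob_space)

lemma integrable_bdd:
  fixes f :: "'b \<Rightarrow> real"
  assumes "\<And>x. \<bar>f x\<bar> \<le> B"
  shows "integrable (measure_pmf M) f"
  using assms by (intro measure_pmf.integrable_const_bound[where B=B]) auto

lemma expect_abs_le:
  fixes f :: "'b \<Rightarrow> real"
  assumes "\<And>x. \<bar>f x\<bar> \<le> c"
  shows "\<bar>measure_pmf.expectation M f\<bar> \<le> c"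
proof -
  have i: "integrable (measure_pmf M) f" by (rule integrable_bdd[OF assms])
  have "\<bar>measure_pmf.expectation M f\<bar> \<le> measure_pmf.expectation M (\<lambda>x. \<bar>f x\<bar>)"
    using integral_norm_bound[of M f] by simp
  also have "\<dots> \<le> measure_pmf.expectation M (\<lambda>x. c)"
    using i assms by (intro integral_mono) auto
  also have "\<dots> = c" by simp
  finally show ?thesis .
qed

lemma expect_01:
  fixes f :: "'b \<Rightarrow> real"
  assumes "\<And>x. 0 \<le> f x \<and> f x \<le> 1"
  shows "0 \<le> measure_pmf.expectation M f \<and> measure_pmf.expectation M f \<le> 1"
proof -
  have i: "integrable (measure_pmf M) f" by (rule integrable_bdd[of f 1]) (use assms in force)
  have "0 \<le> measure_pmf.expectation M f" using assms by (intro integral_nonneg_AE) auto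
  moreover have "measure_pmf.expectation M f \<le> measure_pmf.expectation M (\<lambda>x. 1)"
    using i assms by (intro integral_mono) auto
  ultimately show ?thesis by simp
qed

definition RSet :: "'a set \<Rightarrow> real \<Rightarrow> 'a set pmf" where
  "RSet A q = map_pmf (\<lambda>f. {x\<in>A. f x}) (Pi_pmf A False (\<lambda>_. bernoulli_pmf q))"

lemma set_RSet: "set_pmf (RSet A q) \<subseteq> Pow A"
  by (auto simp: RSet_def)

lemma prod_if_card:
  assumes "finite A" "S \<subseteq> A"
  shows "(\<Prod>x\<in>A. if x \<in> S then a else b) = a ^ card S * b ^ (card A - card S)"
proof -
  have "(\<Prod>x\<in>A. if x \<in> S then a else b) = (\<Prod>x\<in>S. a) * (\<Prod>x\<in>A - S. b)"
    using assms by (subst prod.If_cases) (auto simp: Int_absorb1 Diff_eq)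
  also have "\<dots> = a ^ card S * b ^ (card A - card S)"
    using assms by (simp add: card_Diff_subset finite_subset)
  finally show ?thesis .
qed

lemma pmf_RSet:
  assumes "finite A" "S \<subseteq> A" "0 \<le> q" "q \<le> 1"
  shows "pmf (RSet A q) S = q ^ card S * (1 - q) ^ (card A - card S)"
proof -
  let ?P = "Pi_pmf A False (\<lambda>_. bernoulli_pmf q)"
  let ?f0 = "\<lambda>x. x \<in> S"
  have "pmf (RSet A q) S = measure_pmf.prob ?P ((\<lambda>f. {x\<in>A. f x}) -` {S})"
    unfolding RSet_def by (simp add: pmf_map)
  also have "\<dots> = measure_pmf.prob ?P {?f0}"
  proof (intro measure_prob_cong_0)
    fix f assume f: "f \<in> (\<lambda>f. {x\<in>A. f x}) -` {S} - {?f0}"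
    then have "\<exists>x. x \<notin> A \<and> f x \<noteq> False"
      using assms(2) by (auto simp: fun_eq_iff)
    then show "pmf ?P f = 0" using assms by (intro pmf_Pi_outside) auto
  next
    fix f assume "f \<in> {?f0} - (\<lambda>f. {x\<in>A. f x}) -` {S}"
    then have False using assms(2) by auto
    then show "pmf ?P f = 0" ..
  qed
  also have "\<dots> = pmf ?P ?f0" by (simp add: measure_pmf_single)
  also have "\<dots> = (\<Prod>x\<in>A. if x \<in> S then q else 1 - q)"
    using assms by (subst pmf_Pi') (auto intro!: prod.cong)
  also have "\<dots> = q ^ card S * (1 - q) ^ (card A - card S)"
    by (rule prod_if_card[OF assms(1,2)])
  finally show ?thesis .
qed

lemma expect_RSet:
  fixes h :: "'a set \<Rightarrow> real"
  assumes "finite A" "0 \<le> q" "q \<le> 1"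
  shows "measure_pmf.expectation (RSet A q) h = (\<Sum>S\<in>Pow A. h S * (q ^ card S * (1 - q) ^ (card A - card S)))"
proof -
  have "measure_pmf.expectation (RSet A q) h = (\<Sum>S\<in>Pow A. h S * pmf (RSet A q) S)"
    using assms set_RSet[of A q] by (intro integral_measure_pmf_real) auto
  also have "\<dots> = (\<Sum>S\<in>Pow A. h S * (q ^ card S * (1 - q) ^ (card A - card S)))"
    using assms by (intro sum.cong refl) (auto simp: pmf_RSet)
  finally show ?thesis .
qed

definition Gen :: "nat \<Rightarrow> 'a set pmf \<Rightarrow> 'a set pmf" where
  "Gen k D = map_pmf (\<lambda>T. \<Union>w<k. T w) (Pi_pmf {..<k} {} (\<lambda>_. D))"

lemma Gen_0: "Gen 0 D = return_pmf {}"
  by (simp add: Gen_def)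

lemma Gen_Suc: "Gen (Suc k) D = bind_pmf D (\<lambda>y. map_pmf (\<lambda>G. G \<union> y) (Gen k D))"
proof -
  have u: "(\<Union>w<Suc k. (f(k:=y)) w) = (\<Union>w<k. f w) \<union> y" for f :: "nat \<Rightarrow> 'a set" and y
    by (auto simp: less_Suc_eq)
  have "Gen (Suc k) D = map_pmf (\<lambda>T. \<Union>w<Suc k. T w)
      (do {y \<leftarrow> D; f \<leftarrow> Pi_pmf {..<k} {} (\<lambda>_. D); return_pmf (f(k := y))})"
    unfolding Gen_def lessThan_Suc by (subst Pi_pmf_insert') auto
  also have "\<dots> = bind_pmf D (\<lambda>y. bind_pmf (Pi_pmf {..<k} {} (\<lambda>_. D)) (\<lambda>f. return_pmf ((\<Union>w<k. f w) \<union> y)))"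
    by (simp only: map_bind_pmf map_return_pmf u)
  also have "\<dots> = bind_pmf D (\<lambda>y. map_pmf (\<lambda>G. G \<union> y) (Gen k D))"
    unfolding Gen_def by (simp add: map_pmf_def bind_assoc_pmf bind_return_pmf)
  finally show ?thesis .
qed

lemma expect_Gen_Suc:
  fixes g :: "'a set \<Rightarrow> real"
  assumes "\<And>x. \<bar>g x\<bar> \<le> B"
  shows "measure_pmf.expectation (Gen (Suc k) D) g =
    measure_pmf.expectation D (\<lambda>y. measure_pmf.expectation (Gen k D) (\<lambda>G. g (G \<union> y)))"
  unfolding Gen_Suc by (subst integral_bind_pmf_bdd[where B=B]) (use assms in auto)

lemma coupling:
  fixes D1 D2 :: "'a set pmf"
  assumes del: "\<And>h. (\<And>x. 0 \<le> h x \<and> h x \<le> 1) \<Longrightarrow>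
      \<bar>measure_pmf.expectation D1 h - measure_pmf.expectation D2 h\<bar> \<le> \<delta>"
  shows "(\<And>x. 0 \<le> g x \<and> g x \<le> 1) \<Longrightarrow>
      \<bar>measure_pmf.expectation (Gen k D1) g - measure_pmf.expectation (Gen k D2) g\<bar> \<le> real k * \<delta>"
proof (induction k arbitrary: g)
  case 0
  then show ?case by (simp add: Gen_0)
next
  case (Suc k)
  define \<phi>1 where "\<phi>1 y = measure_pmf.expectation (Gen k D1) (\<lambda>G. g (G \<union> y))" for y
  define \<phi>2 where "\<phi>2 y = measure_pmf.expectation (Gen k D2) (\<lambda>G. g (G \<union> y))" for y
  have gb: "\<bar>g x\<bar> \<le> 1" for x using Suc.prems[of x] by auto
  have e1: "measure_pmf.expectation (Gen (Suc k) D1) g = measure_pmf.expectation D1 \<phi>1"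
    unfolding \<phi>1_def by (rule expect_Gen_Suc[OF gb])
  have e2: "measure_pmf.expectation (Gen (Suc k) D2) g = measure_pmf.expectation D2 \<phi>2"
    unfolding \<phi>2_def by (rule expect_Gen_Suc[OF gb])
  have p1: "0 \<le> \<phi>1 y \<and> \<phi>1 y \<le> 1" for y
    unfolding \<phi>1_def by (rule expect_01) (use Suc.prems in auto)
  have p2: "0 \<le> \<phi>2 y \<and> \<phi>2 y \<le> 1" for y
    unfolding \<phi>2_def by (rule expect_01) (use Suc.prems in auto)
  have d12: "\<bar>\<phi>1 y - \<phi>2 y\<bar> \<le> real k * \<delta>" for y
    unfolding \<phi>1_def \<phi>2_def by (rule Suc.IH) (use Suc.prems in auto)
  have A: "\<bar>measure_pmf.expectation D1 \<phi>1 - measure_pmf.expectation D2 \<phi>1\<bar> \<le> \<delta>"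
    by (rule del) (use p1 in auto)
  have i1: "integrable (measure_pmf D2) \<phi>1" by (rule integrable_bdd[of _ 1]) (use p1 in force)
  have i2: "integrable (measure_pmf D2) \<phi>2" by (rule integrable_bdd[of _ 1]) (use p2 in force)
  have "measure_pmf.expectation D2 \<phi>1 - measure_pmf.expectation D2 \<phi>2 =
        measure_pmf.expectation D2 (\<lambda>y. \<phi>1 y - \<phi>2 y)"
    using i1 i2 by simp
  also have "\<bar>\<dots>\<bar> \<le> real k * \<delta>" by (rule expect_abs_le) (use d12 in auto)
  finally have B: "\<bar>measure_pmf.expectation D2 \<phi>1 - measure_pmf.expectation D2 \<phi>2\<bar> \<le> real k * \<delta>" .
  show ?case unfolding e1 e2 using A B unfolding abs_le_iff by (simp add: algebra_simps; linarith)
qed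



lemma bern_or:
  assumes "0 \<le> a" "a \<le> 1" "0 \<le> b" "b \<le> 1"
  shows "bind_pmf (bernoulli_pmf a) (\<lambda>u. map_pmf (\<lambda>v. u \<or> v) (bernoulli_pmf b)) = bernoulli_pmf (1 - (1-a)*(1-b))"
proof (rule pmf_eqI)
  fix x :: bool
  have t: "map_pmf (\<lambda>v. True \<or> v) (bernoulli_pmf b) = return_pmf True" by simp
  have f: "map_pmf (\<lambda>v. False \<or> v) (bernoulli_pmf b) = bernoulli_pmf b" by simp
  have c: "0 \<le> 1 - (1-a)*(1-b)" "1 - (1-a)*(1-b) \<le> 1" using assms by (auto intro: mult_le_one mult_nonneg_nonneg)
  show "pmf (bind_pmf (bernoulli_pmf a) (\<lambda>u. map_pmf (\<lambda>v. u \<or> v) (bernoulli_pmf b))) x = pmf (bernoulli_pmf (1 - (1-a)*(1-b))) x"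
    using assms c by (cases x) (simp_all add: pmf_bind t f algebra_simps)
qed

lemma RSet_union:
  assumes E: "finite E" and ab: "0 \<le> a" "a \<le> 1" "0 \<le> b" "b \<le> 1"
  shows "bind_pmf (RSet E a) (\<lambda>y. map_pmf (\<lambda>G. G \<union> y) (RSet E b)) = RSet E (1 - (1-a)*(1-b))"
proof -
  define Pa where "Pa = Pi_pmf E False (\<lambda>_. bernoulli_pmf a)"
  define Pb where "Pb = Pi_pmf E False (\<lambda>_. bernoulli_pmf b)"
  have inner: "Pi_pmf E False (\<lambda>x. map_pmf (\<lambda>v. f x \<or> v) (bernoulli_pmf b)) =
      bind_pmf Pb (\<lambda>g. return_pmf (\<lambda>x. if x \<in> E then f x \<or> g x else False))" for f
  proof -
    have "Pi_pmf E False (\<lambda>x. map_pmf (\<lambda>v. f x \<or> v) (bernoulli_pmf b)) =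
        Pi_pmf E False (\<lambda>x. bind_pmf (bernoulli_pmf b) (\<lambda>v. return_pmf (f x \<or> v)))"
      by (simp add: map_pmf_def)
    also have "\<dots> = bind_pmf Pb (\<lambda>g. Pi_pmf E False (\<lambda>x. return_pmf (f x \<or> g x)))"
      unfolding Pb_def by (rule Pi_pmf_bind[OF E])
    also have "\<dots> = bind_pmf Pb (\<lambda>g. return_pmf (\<lambda>x. if x \<in> E then f x \<or> g x else False))"
      using E by simp
    finally show ?thesis .
  qed
  have "RSet E (1 - (1-a)*(1-b)) = map_pmf (\<lambda>f. {x\<in>E. f x})
      (Pi_pmf E False (\<lambda>x. bind_pmf (bernoulli_pmf a) (\<lambda>u. map_pmf (\<lambda>v. u \<or> v) (bernoulli_pmf b))))"
    unfolding RSet_def using bern_or[OF ab] by simp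
  also have "\<dots> = map_pmf (\<lambda>f. {x\<in>E. f x})
      (bind_pmf Pa (\<lambda>f. Pi_pmf E False (\<lambda>x. map_pmf (\<lambda>v. f x \<or> v) (bernoulli_pmf b))))"
    unfolding Pa_def by (subst Pi_pmf_bind[OF E, where d'=False]) simp
  also have "\<dots> = bind_pmf Pa (\<lambda>f. bind_pmf Pb (\<lambda>g. return_pmf {x\<in>E. f x \<or> g x}))"
    unfolding inner by (simp add: map_bind_pmf, intro bind_pmf_cong refl arg_cong[where f=return_pmf], blast)
  also have "\<dots> = bind_pmf (RSet E a) (\<lambda>y. map_pmf (\<lambda>G. G \<union> y) (RSet E b))"
    unfolding RSet_def Pa_def Pb_def
    by (simp add: bind_map_pmf map_pmf_def bind_assoc_pmf bind_return_pmf Un_commute Collect_disj_eq[symmetric] conj_disj_distribL)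
  finally show ?thesis by simp
qed

lemma bern0: "bernoulli_pmf 0 = return_pmf False"
  by (rule pmf_eqI) (case_tac i; simp)

lemma Gen_RSet:
  assumes E: "finite E" and q: "0 \<le> q" "q \<le> 1"
  shows "Gen k (RSet E q) = RSet E (1 - (1-q)^k)"
proof (induction k)
  case 0
  have "RSet E 0 = return_pmf {}"
    unfolding RSet_def using E by (simp add: bern0)
  then show ?case by (simp add: Gen_0)
next
  case (Suc k)
  have k: "0 \<le> 1 - (1-q)^k" "1 - (1-q)^k \<le> 1" using q by (auto simp: power_le_one)
  show ?case unfolding Gen_Suc Suc.IH
    by (subst RSet_union[OF E q k]) (simp add: algebra_simps)
qed



definition clique :: "nat set \<Rightarrow> nat set set" where
  "clique S = {{u, v} | u v. u \<in> S \<and> v \<in> S \<and> u \<noteq> v}"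

lemma clique_empty[simp]: "clique {} = {}" by (auto simp: clique_def)

lemma finite_all_edges: "finite (all_edges n)"
  unfolding all_edges_def by (rule finite_subset[of _ "Pow {..<n}"]) auto

lemma prob_Gnp_expect:
  assumes "0 \<le> q" "q \<le> 1"
  shows "prob_Gnp n q F = measure_pmf.expectation (RSet (all_edges n) q) (\<lambda>X. if X \<in> F then 1 else 0)"
proof -
  let ?w = "\<lambda>S. q ^ card S * (1 - q) ^ (card (all_edges n) - card S)"
  have "measure_pmf.expectation (RSet (all_edges n) q) (\<lambda>X. if X \<in> F then 1 else 0) =
      (\<Sum>S\<in>Pow (all_edges n). (if S \<in> F then 1 else 0) * ?w S)"
    by (rule expect_RSet[OF finite_all_edges assms])
  also have "\<dots> = (\<Sum>S\<in>Pow (all_edges n). if S \<in> F then ?w S else 0)"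
    by (intro sum.cong) auto
  also have "\<dots> = sum ?w {S\<in>Pow (all_edges n). S \<in> F}"
    by (rule sum.inter_filter[symmetric]) (simp add: finite_all_edges)
  also have "{S\<in>Pow (all_edges n). S \<in> F} = Pow (all_edges n) \<inter> F" by auto
  finally show ?thesis unfolding prob_Gnp_def by simp
qed

lemma Gen_clique:
  "Gen m (map_pmf clique D) = map_pmf (\<lambda>T. \<Union>w<m. clique (T w)) (Pi_pmf {..<m} {} (\<lambda>_. D))"
  unfolding Gen_def by (subst Pi_pmf_map[where dflt="{}"]) (auto simp: pmf.map_comp o_def)

lemma IG_eq:
  assumes "W \<in> PiE {..<n} (\<lambda>_. Pow {..<m})"
  shows "intersection_graph n W = (\<Union>w<m. clique {v. v < n \<and> w \<in> W v})"
proof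
  show "intersection_graph n W \<subseteq> (\<Union>w<m. clique {v. v < n \<and> w \<in> W v})"
  proof
    fix e assume "e \<in> intersection_graph n W"
    then obtain u v where e: "e = {u,v}" "u < n" "v < n" "u \<noteq> v" "W u \<inter> W v \<noteq> {}"
      unfolding intersection_graph_def by blast
    then obtain w where w: "w \<in> W u" "w \<in> W v" by blast
    then have "w < m" using assms e by (auto simp: PiE_def Pi_def)
    then show "e \<in> (\<Union>w<m. clique {v. v < n \<and> w \<in> W v})"
      using e w unfolding clique_def by blast
  qed
next
  show "(\<Union>w<m. clique {v. v < n \<and> w \<in> W v}) \<subseteq> intersection_graph n W"
    unfolding clique_def intersection_graph_def by blast
qed

lemma prob_RIG_expect:
  assumes p: "0 \<le> p" "p \<le> 1"
  shows "prob_RIG n m p F = measure_pmf.expectation (Gen m (map_pmf clique (RSet {..<n} p)))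
            (\<lambda>X. if X \<in> F then 1 else 0)"
proof -
  define U where "U = PiE_dflt {..<m} {} (\<lambda>_. Pow {..<n::nat})"
  define ind where "ind X = (if X \<in> F then 1 else (0::real))" for X
  define \<phi> where "\<phi> W = (\<lambda>w. if w < m then {v. v < n \<and> w \<in> W v} else {})" for W :: "nat \<Rightarrow> nat set"
  define \<psi> where "\<psi> T = (\<lambda>v\<in>{..<n}. {w. w < m \<and> v \<in> T w})" for T :: "nat \<Rightarrow> nat set"
  have finU: "finite U" unfolding U_def by (intro finite_PiE_dflt) auto
  have "measure_pmf.expectation (Gen m (map_pmf clique (RSet {..<n} p))) ind =
      measure_pmf.expectation (Pi_pmf {..<m} {} (\<lambda>_. RSet {..<n} p)) (\<lambda>T. ind (\<Union>w<m. clique (T w)))"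
    unfolding Gen_clique by simp
  also have "\<dots> = (\<Sum>T\<in>U. ind (\<Union>w<m. clique (T w)) * pmf (Pi_pmf {..<m} {} (\<lambda>_. RSet {..<n} p)) T)"
  proof (rule integral_measure_pmf_real[OF finU])
    fix T assume "T \<in> set_pmf (Pi_pmf {..<m} {} (\<lambda>_. RSet {..<n} p))"
    then have "T \<in> PiE_dflt {..<m} {} (set_pmf \<circ> (\<lambda>_. RSet {..<n} p))"
      using set_Pi_pmf_subset'[of "{..<m}" "{}" "\<lambda>_. RSet {..<n} p"] by auto
    then show "T \<in> U" using set_RSet[of "{..<n}" p] unfolding U_def PiE_dflt_def by auto
  qed
  also have "\<dots> = (\<Sum>T\<in>U. ind (\<Union>w<m. clique (T w)) * (\<Prod>w<m. \<Prod>v<n. if v \<in> T w then p else 1 - p))"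
  proof (intro sum.cong refl arg_cong2[where f="(*)"])
    fix T assume T: "T \<in> U"
    have "pmf (Pi_pmf {..<m} {} (\<lambda>_. RSet {..<n} p)) T = (\<Prod>w<m. pmf (RSet {..<n} p) (T w))"
      using T by (intro pmf_Pi') (auto simp: U_def PiE_dflt_def)
    also have "\<dots> = (\<Prod>w<m. \<Prod>v<n. if v \<in> T w then p else 1 - p)"
    proof (intro prod.cong refl)
      fix w assume "w \<in> {..<m}"
      then have "T w \<subseteq> {..<n}" using T by (auto simp: U_def PiE_dflt_def)
      then show "pmf (RSet {..<n} p) (T w) = (\<Prod>v<n. if v \<in> T w then p else 1 - p)"
        using p by (simp add: pmf_RSet prod_if_card)
    qed
    finally show "pmf (Pi_pmf {..<m} {} (\<lambda>_. RSet {..<n} p)) T = (\<Prod>w<m. \<Prod>v<n. if v \<in> T w then p else 1 - p)" .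
  qed
  also have "\<dots> = (\<Sum>W\<in>PiE {..<n} (\<lambda>_. Pow {..<m}).
        (\<Prod>v<n. p ^ card (W v) * (1 - p) ^ (m - card (W v))) * ind (intersection_graph n W))"
  proof (rule sym, rule sum.reindex_bij_witness[of _ \<psi> \<phi>])
    fix T assume T: "T \<in> U"
    show "\<phi> (\<psi> T) = T"
      using T by (auto simp: \<phi>_def \<psi>_def U_def PiE_dflt_def fun_eq_iff)
    show "\<psi> T \<in> PiE {..<n} (\<lambda>_. Pow {..<m})"
      by (auto simp: \<psi>_def)
  next
    fix W assume W: "W \<in> PiE {..<n} (\<lambda>_. Pow {..<m})"
    show "\<psi> (\<phi> W) = W"
      using W by (auto simp: \<phi>_def \<psi>_def PiE_def Pi_def extensional_def fun_eq_iff)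
    show "\<phi> W \<in> U" by (auto simp: \<phi>_def U_def PiE_dflt_def)
    have Wv: "W v \<subseteq> {..<m}" if "v < n" for v using W that by auto
    have "(\<Prod>w<m. \<Prod>v<n. if v \<in> \<phi> W w then p else 1 - p) = (\<Prod>w<m. \<Prod>v<n. if w \<in> W v then p else 1 - p)"
      by (intro prod.cong refl) (auto simp: \<phi>_def)
    also have "\<dots> = (\<Prod>v<n. \<Prod>w<m. if w \<in> W v then p else 1 - p)"
      by (rule prod.swap)
    also have "\<dots> = (\<Prod>v<n. p ^ card (W v) * (1 - p) ^ (m - card (W v)))"
      using Wv by (intro prod.cong refl) (simp add: prod_if_card)
    finally have A: "(\<Prod>w<m. \<Prod>v<n. if v \<in> \<phi> W w then p else 1 - p) = (\<Prod>v<n. p ^ card (W v) * (1 - p) ^ (m - card (W v)))" .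
    have B: "(\<Union>w<m. clique (\<phi> W w)) = intersection_graph n W"
      unfolding IG_eq[OF W] by (auto simp: \<phi>_def)
    show "ind (\<Union>w<m. clique (\<phi> W w)) * (\<Prod>w<m. \<Prod>v<n. if v \<in> \<phi> W w then p else 1 - p) =
        (\<Prod>v<n. p ^ card (W v) * (1 - p) ^ (m - card (W v))) * ind (intersection_graph n W)"
      unfolding A B by simp
  qed
  also have "\<dots> = prob_RIG n m p F"
    unfolding prob_RIG_def ind_def by (intro sum.cong refl)
  finally have "measure_pmf.expectation (Gen m (map_pmf clique (RSet {..<n} p))) ind = prob_RIG n m p F" .
  moreover have "ind = (\<lambda>X. if X \<in> F then 1 else 0)" by (rule ext) (simp add: ind_def)
  ultimately show ?thesis by simp
qed



lemma clique_subset_edges: "S \<subseteq> {..<n} \<Longrightarrow> clique S \<subseteq> all_edges n"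
  unfolding clique_def all_edges_def by auto

lemma clique_nonempty_card: assumes "finite S" "clique S \<noteq> {}" shows "2 \<le> card S"
proof -
  from assms(2) obtain u v where "u \<in> S" "v \<in> S" "u \<noteq> v" unfolding clique_def by blast
  then have "card {u,v} \<le> card S" using assms(1) by (intro card_mono) auto
  with \<open>u \<noteq> v\<close> show ?thesis by simp
qed

lemma clique_pair: "u \<noteq> v \<Longrightarrow> clique {u,v} = {{u,v}}"
  unfolding clique_def by (auto simp: insert_commute)

lemma clique_single:
  assumes "clique S = {{u,v}}" "u \<noteq> v"
  shows "S = {u,v}"
proof -
  have "{u,v} \<in> clique S" using assms by simp
  then obtain a b where ab: "{u,v} = {a,b}" "a \<in> S" "b \<in> S" "a \<noteq> b" unfolding clique_def by blast
  then have uv: "u \<in> S" "v \<in> S" by (auto simp: doubleton_eq_iff)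
  have "w \<in> {u,v}" if "w \<in> S" for w
  proof (rule ccontr)
    assume "w \<notin> {u,v}"
    then have "{u,w} \<in> clique S" using uv that unfolding clique_def by blast
    then have "{u,w} = {u,v}" using assms by simp
    then show False using \<open>w \<notin> {u,v}\<close> by (auto simp: doubleton_eq_iff)
  qed
  with uv show ?thesis by auto
qed

lemma card_all_edges: "card (all_edges n) = n choose 2"
proof -
  have "all_edges n = {B. B \<subseteq> {..<n} \<and> card B = 2}" unfolding all_edges_def by auto
  then show ?thesis using n_subsets[of "{..<n}" 2] by simp
qed

lemma choose_le_pow': "n choose k \<le> n ^ k"
  by (cases "k \<le> n") (auto simp: binomial_le_pow binomial_eq_0)

lemma prob_RSet_contains:
  assumes "finite V" "T \<subseteq> V" "0 \<le> p" "p \<le> 1"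
  shows "measure_pmf.prob (RSet V p) {S. T \<subseteq> S} = p ^ card T"
proof -
  define B where "B x = (if x \<in> T then {True} else UNIV)" for x
  have "measure_pmf.prob (RSet V p) {S. T \<subseteq> S} =
      measure_pmf.prob (Pi_pmf V False (\<lambda>_. bernoulli_pmf p)) (Pi V B)"
    unfolding RSet_def measure_map_pmf
    by (rule arg_cong[where f="measure_pmf.prob _"]) (use assms(2) in \<open>auto simp: B_def Pi_def\<close>)
  also have "\<dots> = (\<Prod>x\<in>V. measure_pmf.prob (bernoulli_pmf p) (B x))"
    by (rule measure_Pi_pmf_Pi[OF assms(1)])
  also have "\<dots> = (\<Prod>x\<in>V. if x \<in> T then p else 1)"
    using assms by (intro prod.cong refl) (auto simp: B_def measure_pmf_single)
  also have "\<dots> = p ^ card T" using prod_if_card[OF assms(1,2), of p 1] by simp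
  finally show ?thesis .
qed

lemma prob_RSet_card3:
  assumes "0 \<le> p" "p \<le> 1"
  shows "measure_pmf.prob (RSet {..<n} p) {S. 3 \<le> card S} \<le> real n ^ 3 * p ^ 3"
proof -
  define T3 where "T3 = {T. T \<subseteq> {..<n} \<and> card T = 3}"
  have finT3: "finite T3" unfolding T3_def by (rule finite_subset[of _ "Pow {..<n}"]) auto
  have "measure_pmf.prob (RSet {..<n} p) {S. 3 \<le> card S} =
      measure_pmf.prob (RSet {..<n} p) ({S. 3 \<le> card S} \<inter> set_pmf (RSet {..<n} p))"
    by (simp add: measure_Int_set_pmf)
  also have "\<dots> \<le> measure_pmf.prob (RSet {..<n} p) (\<Union>T\<in>T3. {S. T \<subseteq> S})"
  proof (rule measure_pmf.finite_measure_mono)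
    show "{S. 3 \<le> card S} \<inter> set_pmf (RSet {..<n} p) \<subseteq> (\<Union>T\<in>T3. {S. T \<subseteq> S})"
    proof
      fix S assume S: "S \<in> {S. 3 \<le> card S} \<inter> set_pmf (RSet {..<n} p)"
      then have "S \<subseteq> {..<n}" using set_RSet by blast
      obtain T where "T \<subseteq> S" "card T = 3" using S obtain_subset_with_card_n[of 3 S] by auto
      then show "S \<in> (\<Union>T\<in>T3. {S. T \<subseteq> S})" using \<open>S \<subseteq> {..<n}\<close> unfolding T3_def by blast
    qed
  qed simp
  also have "\<dots> \<le> (\<Sum>T\<in>T3. measure_pmf.prob (RSet {..<n} p) {S. T \<subseteq> S})"
    by (rule measure_pmf.finite_measure_subadditive_finite[OF finT3]) auto
  also have "\<dots> = (\<Sum>T\<in>T3. p ^ 3)"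
    using assms by (intro sum.cong refl) (auto simp: T3_def prob_RSet_contains)
  also have "\<dots> = real (n choose 3) * p ^ 3"
    using n_subsets[of "{..<n}" 3] by (simp add: T3_def)
  also have "\<dots> \<le> real n ^ 3 * p ^ 3"
  proof -
    have "real (n choose 3) \<le> real (n ^ 3)" using choose_le_pow'[of n 3] by linarith
    then show ?thesis using assms by (intro mult_right_mono) auto
  qed
  finally show ?thesis .
qed



lemma exp_neg_le: fixes r :: real assumes "0 \<le> r" shows "exp (-r) \<le> 1 - r + r^2"
proof -
  have "1 + r \<le> exp r" using exp_ge_add_one_self[of r] by simp
  then have "exp (-r) \<le> 1 / (1 + r)" using assms by (simp add: exp_minus field_simps)
  also have "\<dots> \<le> 1 - r + r^2" using assms by (simp add: field_simps power2_eq_square)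
  finally show ?thesis .
qed

lemma single_ineq:
  fixes r :: real assumes r: "0 \<le> r" "r \<le> 1" and N: "1 \<le> N"
  shows "r - (1 - exp (-r)) * exp (-r) ^ (N - 1) \<le> real N * r^2"
proof -
  define X where "X = exp (-r) ^ (N - 1)"
  have X: "X = exp (- (real (N - 1) * r))" unfolding X_def by (simp add: exp_of_nat_mult[symmetric])
  have Xpos: "0 < X" unfolding X_def by simp
  have Xge: "1 - real (N - 1) * r \<le> X" unfolding X using exp_ge_add_one_self[of "- (real (N - 1) * r)"] by simp
  have q: "r - r^2 \<le> 1 - exp (-r)" using exp_neg_le[OF r(1)] by simp
  have rr: "0 \<le> r - r^2" using r by (simp add: power2_eq_square mult_left_le_one_le)
  have "(r - r^2) * (1 - real (N - 1) * r) \<le> (r - r^2) * X"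
    using Xge rr by (rule mult_left_mono)
  also have "\<dots> \<le> (1 - exp (-r)) * X" using q Xpos by (intro mult_right_mono) auto
  finally have A: "(r - r^2) * (1 - real (N - 1) * r) \<le> (1 - exp (-r)) * X" .
  have "real (N - 1) = real N - 1" using N by simp
  then have "(r - r^2) * (1 - real (N - 1) * r) = r - real N * r^2 + (real N - 1) * r^3"
    by (simp add: algebra_simps power2_eq_square power3_eq_cube)
  moreover have "0 \<le> (real N - 1) * r^3" using N r by simp
  ultimately show ?thesis using A unfolding X_def by linarith
qed



lemma expect_sum:
  fixes h :: "'a \<Rightarrow> real"
  assumes "finite U" "set_pmf D \<subseteq> U"
  shows "measure_pmf.expectation D h = (\<Sum>x\<in>U. h x * pmf D x)"
  using assms by (intro integral_measure_pmf_real) auto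

lemma sum_pmf_U:
  assumes "finite U" "set_pmf D \<subseteq> U"
  shows "(\<Sum>x\<in>U. pmf D x) = 1"
  using expect_sum[OF assms, of "\<lambda>_. 1"] by simp

lemma expect_diff_le:
  fixes h :: "'a \<Rightarrow> real"
  assumes U: "finite U" "set_pmf D1 \<subseteq> U" "set_pmf D2 \<subseteq> U"
    and h: "\<And>x. 0 \<le> h x \<and> h x \<le> 1"
  shows "\<bar>measure_pmf.expectation D1 h - measure_pmf.expectation D2 h\<bar> \<le>
      (\<Sum>x\<in>U. max 0 (pmf D1 x - pmf D2 x))"
proof -
  have e1: "measure_pmf.expectation D1 h = (\<Sum>x\<in>U. h x * pmf D1 x)" by (rule expect_sum[OF U(1,2)])
  have e2: "measure_pmf.expectation D2 h = (\<Sum>x\<in>U. h x * pmf D2 x)" by (rule expect_sum[OF U(1,3)])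
  have s1: "(\<Sum>x\<in>U. pmf D1 x) = 1" by (rule sum_pmf_U[OF U(1,2)])
  have s2: "(\<Sum>x\<in>U. pmf D2 x) = 1" by (rule sum_pmf_U[OF U(1,3)])
  have A: "(\<Sum>x\<in>U. h x * pmf D1 x) - (\<Sum>x\<in>U. h x * pmf D2 x) = (\<Sum>x\<in>U. h x * (pmf D1 x - pmf D2 x))"
    by (simp add: sum_subtractf algebra_simps)
  also have "\<dots> \<le> (\<Sum>x\<in>U. max 0 (pmf D1 x - pmf D2 x))"
  proof (intro sum_mono)
    fix x
    have "0 \<le> h x" "h x \<le> 1" using h[of x] by auto
    then show "h x * (pmf D1 x - pmf D2 x) \<le> max 0 (pmf D1 x - pmf D2 x)"
      by (cases "pmf D1 x - pmf D2 x \<ge> 0") (auto simp: mult_left_le_one_le mult_nonneg_nonpos max_def intro: order_trans[OF mult_left_le])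
  qed
  finally have B1: "(\<Sum>x\<in>U. h x * pmf D1 x) - (\<Sum>x\<in>U. h x * pmf D2 x) \<le> (\<Sum>x\<in>U. max 0 (pmf D1 x - pmf D2 x))" .
  have "(\<Sum>x\<in>U. h x * pmf D2 x) - (\<Sum>x\<in>U. h x * pmf D1 x) =
      (\<Sum>x\<in>U. (1 - h x) * (pmf D1 x - pmf D2 x)) + ((\<Sum>x\<in>U. pmf D2 x) - (\<Sum>x\<in>U. pmf D1 x))"
    by (simp add: sum_subtractf sum.distrib algebra_simps)
  also have "\<dots> = (\<Sum>x\<in>U. (1 - h x) * (pmf D1 x - pmf D2 x))" using s1 s2 by simp
  also have "\<dots> \<le> (\<Sum>x\<in>U. max 0 (pmf D1 x - pmf D2 x))"
  proof (intro sum_mono)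
    fix x
    have "0 \<le> 1 - h x" "1 - h x \<le> 1" using h[of x] by auto
    then show "(1 - h x) * (pmf D1 x - pmf D2 x) \<le> max 0 (pmf D1 x - pmf D2 x)"
      by (cases "pmf D1 x - pmf D2 x \<ge> 0") (auto simp: mult_left_le_one_le mult_nonneg_nonpos max_def intro: order_trans[OF mult_left_le])
  qed
  finally have B2: "(\<Sum>x\<in>U. h x * pmf D2 x) - (\<Sum>x\<in>U. h x * pmf D1 x) \<le> (\<Sum>x\<in>U. max 0 (pmf D1 x - pmf D2 x))" .
  show ?thesis unfolding e1 e2 using B1 B2 by linarith
qed



lemma set_D1: "set_pmf (map_pmf clique (RSet {..<n} p)) \<subseteq> Pow (all_edges n)"
  using set_RSet[of "{..<n}" p] clique_subset_edges[of _ n] by auto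

lemma set_D2: "set_pmf (RSet (all_edges n) q) \<subseteq> Pow (all_edges n)"
  by (rule set_RSet)

lemma pmf_D1_single:
  assumes p: "0 \<le> p" "p \<le> 1" and e: "e \<in> all_edges n"
  shows "pmf (map_pmf clique (RSet {..<n} p)) {e} = p^2 * (1-p)^(n-2)"
proof -
  obtain u v where uv: "e = {u,v}" "u \<noteq> v" using e unfolding all_edges_def by (auto simp: card_2_iff)
  have esub: "e \<subseteq> {..<n}" "card e = 2" using e unfolding all_edges_def by auto
  have "pmf (map_pmf clique (RSet {..<n} p)) {e} = measure_pmf.prob (RSet {..<n} p) (clique -` {{e}})"
    by (simp add: pmf_map)
  also have "\<dots> = measure_pmf.prob (RSet {..<n} p) {e}"
  proof (rule measure_prob_cong_0)
    fix S assume S: "S \<in> clique -` {{e}} - {e}"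
    show "pmf (RSet {..<n} p) S = 0"
    proof (cases "S \<subseteq> {..<n}")
      case True
      then have False using S clique_single[of S u v] uv by auto
      then show ?thesis ..
    next
      case False
      then have "S \<notin> set_pmf (RSet {..<n} p)" using set_RSet by blast
      then show ?thesis by (simp add: set_pmf_eq)
    qed
  next
    fix S assume "S \<in> {e} - clique -` {{e}}"
    then have False using clique_pair[OF uv(2)] uv by auto
    then show "pmf (RSet {..<n} p) S = 0" ..
  qed
  also have "\<dots> = pmf (RSet {..<n} p) e" by (simp add: measure_pmf_single)
  also have "\<dots> = p^2 * (1-p)^(n-2)" using p esub by (simp add: pmf_RSet)
  finally show ?thesis .
qed

lemma delta_bound:
  fixes n :: nat and p :: real
  assumes p: "0 \<le> p" "p \<le> 1"
  defines "r \<equiv> p^2 * (1-p)^(n-2)"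
  defines "q \<equiv> 1 - exp (-r)"
  defines "D1 \<equiv> map_pmf clique (RSet {..<n} p)"
  defines "D2 \<equiv> RSet (all_edges n) q"
  shows "(\<Sum>x\<in>Pow (all_edges n). max 0 (pmf D1 x - pmf D2 x)) \<le> real n^3 * p^3 + real n^4 * p^4"
proof -
  define E where "E = all_edges n"
  define N where "N = card E"
  define Sing where "Sing = (\<lambda>e. {e}) ` E"
  define R where "R = Pow E - insert {} Sing"
  define f where "f x = max 0 (pmf D1 x - pmf D2 x)" for x
  have finE: "finite E" unfolding E_def by (rule finite_all_edges)
  have r0: "0 \<le> r" unfolding r_def using p by simp
  have rp: "r \<le> p^2" unfolding r_def using p by (simp add: mult_left_le power_le_one)
  have r1: "r \<le> 1" using rp p by (meson order_trans power_le_one)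
  have q0: "0 \<le> q" "q \<le> 1" unfolding q_def using r0 by auto
  have oneq: "1 - q = exp (-r)" unfolding q_def by simp
  have finS: "finite Sing" unfolding Sing_def using finE by simp
  have finR: "finite R" unfolding R_def using finE by simp
  have SingE: "Sing \<subseteq> Pow E" unfolding Sing_def by auto
  have split: "Pow E = insert {} (Sing \<union> R)" unfolding R_def Sing_def by auto
  have "(\<Sum>x\<in>Pow E. f x) = f {} + ((\<Sum>x\<in>Sing. f x) + (\<Sum>x\<in>R. f x))"
    unfolding split using finS finR
    by (subst sum.insert) (auto simp: R_def Sing_def intro!: sum.union_disjoint)
  moreover
  have pmf1: "pmf D1 {e} = r" if "e \<in> E" for e
    unfolding D1_def r_def using pmf_D1_single[OF p] that by (simp add: E_def)
  have pmf2: "pmf D2 {e} = q * (1-q)^(N-1)" if "e \<in> E" for e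
    unfolding D2_def N_def using that q0 finE by (subst pmf_RSet) (auto simp: E_def)
  have pmf2e: "pmf D2 {} = (1-q)^N"
    unfolding D2_def N_def using q0 finE by (subst pmf_RSet) (auto simp: E_def)
  have sumSing: "(\<Sum>x\<in>Sing. g x) = (\<Sum>e\<in>E. g {e})" for g :: "nat set set \<Rightarrow> real"
    unfolding Sing_def by (subst sum.reindex) (auto simp: inj_on_def)
  have f0: "f {} = 0"
  proof -
    have "(\<Sum>x\<in>insert {} Sing. pmf D1 x) \<le> (\<Sum>x\<in>Pow E. pmf D1 x)"
      using SingE finE by (intro sum_mono2) auto
    also have "\<dots> = 1" unfolding D1_def E_def by (rule sum_pmf_U[OF _ set_D1]) (simp add: finite_all_edges)
    finally have S1: "(\<Sum>x\<in>insert {} Sing. pmf D1 x) \<le> 1" .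
    have "(\<Sum>x\<in>insert {} Sing. pmf D1 x) = pmf D1 {} + (\<Sum>x\<in>Sing. pmf D1 x)"
      using finS by (intro sum.insert) (auto simp: Sing_def)
    then have "pmf D1 {} + (\<Sum>e\<in>E. pmf D1 {e}) \<le> 1"
      using S1 sumSing[of "pmf D1"] by linarith
    then have A: "pmf D1 {} \<le> 1 - real N * r" using pmf1 by (simp add: N_def)
    have "1 - real N * r \<le> exp (- (real N * r))" using exp_ge_add_one_self[of "- (real N * r)"] by simp
    also have "\<dots> = pmf D2 {}" unfolding pmf2e oneq by (simp add: exp_of_nat_mult[symmetric])
    finally show ?thesis using A unfolding f_def by simp
  qed
  moreover have fS: "(\<Sum>x\<in>Sing. f x) \<le> real N * (real N * r^2)"
  proof -
    have "(\<Sum>x\<in>Sing. f x) = (\<Sum>e\<in>E. f {e})" by (rule sumSing)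
    also have "\<dots> \<le> (\<Sum>e\<in>E. real N * r^2)"
    proof (rule sum_mono)
      fix e assume e: "e \<in> E"
      have "E \<noteq> {}" using e by auto
      then have "0 < card E" using finE by (simp add: card_gt_0_iff)
      then have N1: "1 \<le> N" unfolding N_def by simp
      have I: "r - q * (1-q)^(N-1) \<le> real N * r^2"
        unfolding oneq unfolding q_def by (rule single_ineq[OF r0 r1 N1])
      have Z: "0 \<le> real N * r^2" by simp
      show "f {e} \<le> real N * r^2" unfolding f_def pmf1[OF e] pmf2[OF e]
        by (rule max.boundedI[OF Z I])
    qed
    also have "\<dots> = real N * (real N * r^2)" by (simp add: N_def)
    finally show ?thesis .
  qed
  moreover have fR: "(\<Sum>x\<in>R. f x) \<le> real n^3 * p^3"
  proof -
    have "(\<Sum>x\<in>R. f x) \<le> (\<Sum>x\<in>R. pmf D1 x)" unfolding f_def by (intro sum_mono) auto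
    also have "\<dots> = measure_pmf.prob D1 R" by (rule measure_measure_pmf_finite[symmetric, OF finR])
    also have "\<dots> = measure_pmf.prob (RSet {..<n} p) (clique -` R \<inter> set_pmf (RSet {..<n} p))"
      unfolding D1_def by (simp add: measure_Int_set_pmf)
    also have "\<dots> \<le> measure_pmf.prob (RSet {..<n} p) {S. 3 \<le> card S}"
    proof (rule measure_pmf.finite_measure_mono)
      show "clique -` R \<inter> set_pmf (RSet {..<n} p) \<subseteq> {S. 3 \<le> card S}"
      proof
        fix S assume S: "S \<in> clique -` R \<inter> set_pmf (RSet {..<n} p)"
        then have Sn: "S \<subseteq> {..<n}" using set_RSet by blast
        then have finS: "finite S" by (rule finite_subset) simp
        have cR: "clique S \<in> R" using S by simp
        then have ne: "clique S \<noteq> {}" unfolding R_def by auto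
        have "\<not> card S \<le> 2"
        proof
          assume "card S \<le> 2"
          then have "card S = 2" using clique_nonempty_card[OF finS ne] by simp
          then obtain u v where uv: "S = {u,v}" "u \<noteq> v" by (auto simp: card_2_iff)
          then have "{u,v} \<in> E" using Sn unfolding E_def all_edges_def by auto
          then have "clique S \<in> Sing" unfolding Sing_def uv clique_pair[OF uv(2)] by simp
          then show False using cR unfolding R_def by simp
        qed
        then show "S \<in> {S. 3 \<le> card S}" by simp
      qed
    qed simp
    also have "\<dots> \<le> real n^3 * p^3" by (rule prob_RSet_card3[OF p])
    finally show ?thesis .
  qed
  moreover have "real N * (real N * r^2) \<le> real n^4 * p^4"
  proof -
    have "real N \<le> real n ^ 2" unfolding N_def E_def card_all_edges using choose_le_pow'[of n 2]
      by (metis of_nat_le_iff of_nat_power)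
    then have "real N * r \<le> real n^2 * p^2" using rp r0 by (intro mult_mono) auto
    moreover have "0 \<le> real N * r" using r0 by simp
    ultimately have "(real N * r)^2 \<le> (real n^2 * p^2)^2" by (rule power_mono)
    then show ?thesis by (simp add: power2_eq_square algebra_simps power4_eq_xxxx)
  qed
  ultimately show ?thesis unfolding f_def E_def by linarith
qed



lemma main_bound:
  fixes p :: real and m n :: nat
  assumes p: "0 \<le> p" "p \<le> 1"
  shows "\<bar>prob_Gnp n (1 - exp (- (real m * p\<^sup>2 * (1 - p) ^ (n - 2)))) F - prob_RIG n m p F\<bar>
      \<le> real m * (real n^3 * p^3 + real n^4 * p^4)"
proof -
  define r where "r = p^2 * (1-p)^(n-2)"
  define q where "q = 1 - exp (-r)"
  define D1 where "D1 = map_pmf clique (RSet {..<n} p)"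
  define D2 where "D2 = RSet (all_edges n) q"
  define ind where "ind X = (if X \<in> F then 1 else (0::real))" for X
  have r0: "0 \<le> r" unfolding r_def using p by simp
  have q0: "0 \<le> q" "q \<le> 1" unfolding q_def using r0 by auto
  have qhat: "1 - exp (- (real m * p\<^sup>2 * (1 - p) ^ (n - 2))) = 1 - (1 - q)^m"
    unfolding q_def r_def by (simp add: exp_of_nat_mult[symmetric] mult.assoc)
  have qh01: "0 \<le> 1 - (1-q)^m" "1 - (1-q)^m \<le> 1" using q0 by (auto simp: power_le_one)
  have G: "prob_Gnp n (1 - exp (- (real m * p\<^sup>2 * (1 - p) ^ (n - 2)))) F =
      measure_pmf.expectation (Gen m D2) ind"
    unfolding qhat prob_Gnp_expect[OF qh01] D2_def Gen_RSet[OF finite_all_edges q0] ind_def ..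
  have R: "prob_RIG n m p F = measure_pmf.expectation (Gen m D1) ind"
    unfolding prob_RIG_expect[OF p] D1_def ind_def ..
  have del: "\<bar>measure_pmf.expectation D1 h - measure_pmf.expectation D2 h\<bar> \<le> real n^3 * p^3 + real n^4 * p^4"
    if h: "\<And>x. 0 \<le> h x \<and> h x \<le> 1" for h
  proof -
    have "\<bar>measure_pmf.expectation D1 h - measure_pmf.expectation D2 h\<bar> \<le>
        (\<Sum>x\<in>Pow (all_edges n). max 0 (pmf D1 x - pmf D2 x))"
      unfolding D1_def D2_def by (rule expect_diff_le[OF _ set_D1 set_D2 h]) (simp add: finite_all_edges)
    also have "\<dots> \<le> real n^3 * p^3 + real n^4 * p^4"
      unfolding D1_def D2_def q_def r_def by (rule delta_bound[OF p])
    finally show ?thesis .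
  qed
  have "\<bar>measure_pmf.expectation (Gen m D1) ind - measure_pmf.expectation (Gen m D2) ind\<bar>
      \<le> real m * (real n^3 * p^3 + real n^4 * p^4)"
    by (rule coupling[OF del]) (auto simp: ind_def)
  then show ?thesis unfolding G R by linarith
qed

lemma bound_tendsto:
  fixes m :: "nat \<Rightarrow> nat" and p :: "nat \<Rightarrow> real"
  assumes m_pos: "\<forall>n. m n > 0"
    and p_prob: "\<forall>n. 0 \<le> p n \<and> p n \<le> 1"
    and p_small: "p \<in> o(\<lambda>n. 1 / (real n * root 3 (real (m n))))"
  shows "((\<lambda>n. real (m n) * (real n^3 * p n^3 + real n^4 * p n^4)) \<longlongrightarrow> 0) sequentially"
proof -
  define x where "x n = p n * (real n * root 3 (real (m n)))" for n
  have "((\<lambda>n. p n / (1 / (real n * root 3 (real (m n))))) \<longlongrightarrow> 0) sequentially"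
    by (rule smalloD_tendsto[OF p_small])
  then have x0: "(x \<longlongrightarrow> 0) sequentially" unfolding x_def by simp
  have x3: "(\<lambda>n. x n ^ 3 + x n ^ 4) \<longlonglongrightarrow> 0"
    using tendsto_add[OF tendsto_power[OF x0, of 3] tendsto_power[OF x0, of 4]] by simp
  have le: "norm (real (m n) * (real n^3 * p n^3 + real n^4 * p n^4)) \<le> x n ^ 3 + x n ^ 4" for n
  proof -
    have pn: "0 \<le> p n" using p_prob by auto
    have rt: "root 3 (real (m n)) ^ 3 = real (m n)" by (simp add: real_root_pow_pos2)
    have r1: "1 \<le> root 3 (real (m n))" using m_pos[rule_format, of n] by simp
    have A: "real (m n) * (real n^3 * p n^3) = x n ^ 3"
      unfolding x_def using rt by (simp add: power_mult_distrib)
    have "p n * 1 \<le> p n * root 3 (real (m n))" by (rule mult_left_mono[OF r1 pn])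
    then have "real n * (p n * 1) \<le> real n * (p n * root 3 (real (m n)))" by (rule mult_left_mono) simp
    then have np: "real n * p n \<le> x n" unfolding x_def by (simp add: mult.assoc mult.left_commute)
    have "real (m n) * (real n^4 * p n^4) = x n ^ 3 * (real n * p n)"
      unfolding x_def using rt by (simp add: power_mult_distrib algebra_simps power_Suc[symmetric] eval_nat_numeral)
    also have "\<dots> \<le> x n ^ 3 * x n"
      using np pn by (intro mult_left_mono) (auto simp: x_def)
    finally have B: "real (m n) * (real n^4 * p n^4) \<le> x n ^ 4" by (simp add: eval_nat_numeral)
    have "0 \<le> real (m n) * (real n^3 * p n^3 + real n^4 * p n^4)" using pn by simp
    then show ?thesis using A B by (simp add: distrib_left)
  qed
  show ?thesis
    by (rule Lim_null_comparison[OF _ x3]) (use le in auto)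
qed

theorem theorem1:
  fixes m :: "nat \<Rightarrow> nat" and p :: "nat \<Rightarrow> real" and a :: real
    and A :: "nat \<Rightarrow> nat set set set"
  assumes m_pos: "\<forall>n. m n > 0"
    and p_prob: "\<forall>n. 0 \<le> p n \<and> p n \<le> 1"
    and p_small: "p \<in> o(\<lambda>n. 1 / (real n * root 3 (real (m n))))"
    and a_range: "0 \<le> a \<and> a \<le> 1"
    and A_prop: "graph_property A"
  shows "((\<lambda>n. prob_Gnp n (1 - exp (- (real (m n) * (p n)\<^sup>2 * (1 - p n) ^ (n - 2)))) (A n))
            \<longlongrightarrow> a) sequentially
         \<longleftrightarrow> ((\<lambda>n. prob_RIG n (m n) (p n) (A n)) \<longlongrightarrow> a) sequentially"
proof -
  define f where "f n = prob_Gnp n (1 - exp (- (real (m n) * (p n)\<^sup>2 * (1 - p n) ^ (n - 2)))) (A n)" for n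
  define g where "g n = prob_RIG n (m n) (p n) (A n)" for n
  have d: "((\<lambda>n. f n - g n) \<longlongrightarrow> 0) sequentially"
  proof (rule Lim_null_comparison[OF _ bound_tendsto[OF m_pos p_prob p_small]])
    show "\<forall>\<^sub>F n in sequentially. norm (f n - g n) \<le> real (m n) * (real n^3 * p n^3 + real n^4 * p n^4)"
      using main_bound p_prob unfolding f_def g_def by auto
  qed
  have "(f \<longlongrightarrow> a) sequentially \<longleftrightarrow> (g \<longlongrightarrow> a) sequentially"
  proof
    assume "(f \<longlongrightarrow> a) sequentially"
    from tendsto_diff[OF this d] show "(g \<longlongrightarrow> a) sequentially" by simp
  next
    assume "(g \<longlongrightarrow> a) sequentially"
    from tendsto_add[OF this d] show "(f \<longlongrightarrow> a) sequentially" by simp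
  qed
  then show ?thesis unfolding f_def g_def .
qed

end
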